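(* Let $n > m\ge 1$ be integers with $n\ge 2m$, let $\mathbb{S}\subseteq\mathbb{R}$, and let $f:\mathbb{S}\to\mathbb{R}^n$ be a function. Let $U=\begin{bmatrix}U_1 & U_2\end{bmatrix}\in\mathbb{R}^{n\times n}$ be an orthogonal matrix with $U_1\in\mathbb{R}^{n\times m}$, $U_2\in\mathbb{R}^{n\times(n-m)}$, whose columns form a complete basis of the range of $f(\mu)$ for all $\mu\in\mathbb{S}$. Let $P\in\mathbb{R}^{n\times m}$ be a selection operator such that $P^TU_1$ is invertible, and let $\sigma_1\ge\cdots\ge\sigma_m>0$ be the singular values of $P^TU_1$. Let $\mu_1,\dots,\mu_N\in\mathbb{S}$, $f_i:=f(\mu_i)$, $\tilde f_i:=U_1(P^TU_1)^{-1}P^Tf_i$, $\hat f_i:=U_1U_1^Tf_i$, and $X:=U_2^T\begin{bmatrix} f_1 & f_2 & \cdots & f_N\end{bmatrix}\in\mathbb{R}^{(n-m)\times N}$. Let $\lambda_1(XX^T)\ge\lambda_2(XX^T)\ge\cdots\ge\lambda_{n-m}(XX^T)\ge0$ be the eigenvalues of $XX^T$. Then $$\frac1N\sum_{i=1}^N\lVert\tilde f_i-\hat f_i\rVert_2^2\le\frac1N\sum_{i=1}^m\left(\sigma_{m-i+1}^{-2}-1\right)\lambda_i(XX^T).$$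
   Context: A selection (mask) operator $P\in\mathbb{R}^{n\times m}$ is a matrix whose columns are $m$ distinct columns of the identity matrix $\mathbb{I}_n$. $\lVert\cdot\rVert_2$ is the Euclidean norm. *)

theory Defs
  imports "Jordan_Normal_Form.Char_Poly"
begin

definition selection_operator :: "nat \<Rightarrow> nat \<Rightarrow> real mat \<Rightarrow> bool" where
  "selection_operator n m P \<longleftrightarrow> P \<in> carrier_mat n m \<and>
     (\<exists>p. inj_on p {..<m} \<and> p ` {..<m} \<subseteq> {..<n} \<and>
          (\<forall>i<n. \<forall>j<m. P $$ (i,j) = (if i = p j then 1 else 0)))"

text \<open>Eigenvalues (with multiplicity) of a square real matrix whose characteristic polynomial
  splits over the reals, listed in non-increasing order: the unique sorted list of roots.\<close>
definition eigvals_desc :: "real mat \<Rightarrow> real list" where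
  "eigvals_desc A = (THE ls. length ls = dim_row A \<and> sorted_wrt (\<ge>) ls \<and>
       char_poly A = prod_list (map (\<lambda>a. [:- a, 1:]) ls))"

definition sing_vals_desc :: "real mat \<Rightarrow> real list" where
  "sing_vals_desc B = map sqrt (eigvals_desc (transpose_mat B * B))"

definition hconcat :: "real mat \<Rightarrow> real mat \<Rightarrow> real mat" where
  "hconcat A B = mat (dim_row A) (dim_col A + dim_col B)
     (\<lambda>(i,j). if j < dim_col A then A $$ (i,j) else B $$ (i, j - dim_col A))"

end

theory Submission
  imports Defs
begin

lemma sum_real_sq_pos:
  fixes f :: "nat \<Rightarrow> real"
  assumes "i < n"
  shows "f i * f i \<le> (\<Sum>j\<in>{0..<n}. f j * f j)"
  by (rule member_le_sum[where f="\<lambda>j. f j * f j"], insert assms, auto)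

lemma real_eigen_exists:
  fixes A :: "real mat"
  assumes A: "A \<in> carrier_mat n n" and sym: "transpose_mat A = A" and n: "0 < n"
  shows "\<exists>e v. v \<in> carrier_vec n \<and> v \<noteq> 0\<^sub>v n \<and> A *\<^sub>v v = e \<cdot>\<^sub>v v"
proof -
  let ?Ac = "map_mat complex_of_real A"
  have Ac: "?Ac \<in> carrier_mat n n" using A by auto
  obtain as where cp: "char_poly ?Ac = (\<Prod>a\<leftarrow>as. [:-a,1:])" and len: "length as = n"
    using char_poly_factorized[OF Ac] by blast
  define z where "z = hd as"
  have zas: "z \<in> set as" using len n by (cases as) (auto simp: z_def)
  have "poly (char_poly ?Ac) z = 0" unfolding cp using zas
    by (simp add: poly_prod_list_zero_iff)
  then have "eigenvalue ?Ac z" using eigenvalue_root_char_poly[OF Ac] by simp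
  then obtain w where w: "w \<in> carrier_vec n" "w \<noteq> 0\<^sub>v n" "?Ac *\<^sub>v w = z \<cdot>\<^sub>v w"
    unfolding eigenvalue_def eigenvector_def using Ac by auto
  define x where "x = vec n (\<lambda>i. Re (w $ i))"
  define y where "y = vec n (\<lambda>i. Im (w $ i))"
  have x: "x \<in> carrier_vec n" and y: "y \<in> carrier_vec n" unfolding x_def y_def by auto
  have eq: "(\<Sum>j\<in>{0..<n}. complex_of_real (A $$ (i,j)) * w $ j) = z * w $ i" if i: "i < n" for i
  proof -
    have "(?Ac *\<^sub>v w) $ i = (z \<cdot>\<^sub>v w) $ i" using w(3) by simp
    thus ?thesis using i A w(1) by (simp add: scalar_prod_def row_def)
  qed
  have Ax: "A *\<^sub>v x = Re z \<cdot>\<^sub>v x - Im z \<cdot>\<^sub>v y"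
  proof (rule eq_vecI)
    fix i assume "i < dim_vec (Re z \<cdot>\<^sub>v x - Im z \<cdot>\<^sub>v y)"
    hence i: "i < n" using x y by simp
    have "Re (\<Sum>j\<in>{0..<n}. complex_of_real (A $$ (i,j)) * w $ j) = Re (z * w $ i)" using eq[OF i] by simp
    hence "(\<Sum>j\<in>{0..<n}. A $$ (i,j) * Re (w $ j)) = Re z * Re (w $ i) - Im z * Im (w $ i)"
      by (simp add: Re_sum)
    thus "(A *\<^sub>v x) $ i = (Re z \<cdot>\<^sub>v x - Im z \<cdot>\<^sub>v y) $ i"
      using i A x y by (simp add: scalar_prod_def row_def x_def y_def)
  qed (insert A x y, auto)
  have Ay: "A *\<^sub>v y = Re z \<cdot>\<^sub>v y + Im z \<cdot>\<^sub>v x"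
  proof (rule eq_vecI)
    fix i assume "i < dim_vec (Re z \<cdot>\<^sub>v y + Im z \<cdot>\<^sub>v x)"
    hence i: "i < n" using x y by simp
    have "Im (\<Sum>j\<in>{0..<n}. complex_of_real (A $$ (i,j)) * w $ j) = Im (z * w $ i)" using eq[OF i] by simp
    hence "(\<Sum>j\<in>{0..<n}. A $$ (i,j) * Im (w $ j)) = Re z * Im (w $ i) + Im z * Re (w $ i)"
      by (simp add: Im_sum)
    thus "(A *\<^sub>v y) $ i = (Re z \<cdot>\<^sub>v y + Im z \<cdot>\<^sub>v x) $ i"
      using i A x y by (simp add: scalar_prod_def row_def x_def y_def)
  qed (insert A x y, auto)
  have symm: "y \<bullet> (A *\<^sub>v x) = x \<bullet> (A *\<^sub>v y)"
  proof -
    have "y \<bullet> (A *\<^sub>v x) = (transpose_mat A *\<^sub>v y) \<bullet> x"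
      using transpose_vec_mult_scalar[OF A x y] by simp
    also have "\<dots> = x \<bullet> (A *\<^sub>v y)" unfolding sym
      by (rule comm_scalar_prod[of _ n], insert A y x, auto)
    finally show ?thesis .
  qed
  have xy: "x \<bullet> y = y \<bullet> x" by (rule comm_scalar_prod[OF x y])
  have "Im z * (x \<bullet> x + y \<bullet> y) = 0"
    using symm unfolding Ax Ay using x y xy
    by (simp add: scalar_prod_minus_distrib scalar_prod_add_distrib algebra_simps)
  moreover obtain i where i: "i < n" "w $ i \<noteq> 0" using w(1,2) by (metis eq_vecI index_zero_vec(1,2) carrier_vecD)
  moreover have "x \<bullet> x \<ge> Re (w $ i) * Re (w $ i)" "y \<bullet> y \<ge> Im (w $ i) * Im (w $ i)"
    using sum_real_sq_pos[OF i(1)] x y unfolding scalar_prod_def x_def y_def by auto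
  moreover have "Re (w $ i) * Re (w $ i) + Im (w $ i) * Im (w $ i) > 0"
    using i(2) by (auto simp: sum_squares_gt_zero_iff complex_eq_iff)
  ultimately have Imz: "Im z = 0" by (smt (verit) mult_eq_0_iff)
  show ?thesis
  proof (cases "Re (w $ i) = 0")
    case True
    hence "Im (w $ i) \<noteq> 0" using i(2) complex_eq_iff by auto
    hence "y \<noteq> 0\<^sub>v n" using i(1) unfolding y_def by (metis index_vec index_zero_vec(1))
    moreover have "Re z \<cdot>\<^sub>v y + Im z \<cdot>\<^sub>v x = Re z \<cdot>\<^sub>v y"
      by (rule eq_vecI, insert x y Imz, auto)
    ultimately show ?thesis using Ay y by metis
  next
    case False
    hence "x \<noteq> 0\<^sub>v n" using i(1) unfolding x_def by (metis index_vec index_zero_vec(1))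
    moreover have "Re z \<cdot>\<^sub>v x - Im z \<cdot>\<^sub>v y = Re z \<cdot>\<^sub>v x"
      by (rule eq_vecI, insert x y Imz, auto)
    ultimately show ?thesis using Ax x by metis
  qed
qed

lemma real_self_scalar_zero:
  fixes u :: "real vec"
  assumes u: "u \<in> carrier_vec n" and uu: "u \<bullet> u = 0"
  shows "u = 0\<^sub>v n"
proof (rule eq_vecI)
  fix i assume "i < dim_vec (0\<^sub>v n :: real vec)"
  hence i: "i < n" by simp
  have "u $ i * u $ i \<le> u \<bullet> u" using sum_real_sq_pos[OF i, of "\<lambda>j. u $ j"] u
    by (simp add: scalar_prod_def)
  hence "u $ i * u $ i \<le> 0" using uu by simp
  hence "u $ i = 0" by (simp add: le_less not_square_less_zero)
  thus "u $ i = 0\<^sub>v n $ i" using i by simp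
qed (insert u, auto)

lemma real_self_scalar_nonneg:
  fixes u :: "real vec"
  shows "u \<bullet> u \<ge> 0"
  unfolding scalar_prod_def by (rule sum_nonneg) simp

lemma householder:
  fixes v :: "real vec"
  assumes v: "v \<in> carrier_vec n" and vv: "v \<bullet> v = 1" and n: "0 < n"
  shows "\<exists>W. W \<in> carrier_mat n n \<and> transpose_mat W = W \<and> W * W = 1\<^sub>m n \<and> W *\<^sub>v unit_vec n 0 = v"
proof (cases "v = unit_vec n 0")
  case True
  show ?thesis
    by (rule exI[of _ "1\<^sub>m n"], insert True, auto)
next
  case False
  define u where "u = v - unit_vec n 0"
  have u: "u \<in> carrier_vec n" unfolding u_def using v by auto
  have u_idx: "u $ i = v $ i - (if i = 0 then 1 else 0)" if "i < n" for i
    using that v unfolding u_def by auto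
  have "u \<noteq> 0\<^sub>v n"
  proof
    assume u0: "u = 0\<^sub>v n"
    have "v $ i = unit_vec n 0 $ i" if i: "i < n" for i
    proof -
      have "u $ i = 0" using u0 i by simp
      thus ?thesis using u_idx[OF i] i n by simp
    qed
    hence "v = unit_vec n 0" using v by (intro eq_vecI) auto
    thus False using False by simp
  qed
  hence uu0: "u \<bullet> u \<noteq> 0" using real_self_scalar_zero[OF u] by blast
  have "u \<bullet> u = (\<Sum>i\<in>{0..<n}. v $ i * v $ i) - 2 * v $ 0 + 1"
  proof -
    have "u \<bullet> u = (\<Sum>i\<in>{0..<n}. v $ i * v $ i - 2 * (if i = 0 then v $ i else 0) + (if i = 0 then 1 else 0))"
      unfolding scalar_prod_def using u by (intro sum.cong refl) (auto simp: u_idx algebra_simps)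
    also have "\<dots> = (\<Sum>i\<in>{0..<n}. v $ i * v $ i) - 2 * v $ 0 + 1"
      using n by (simp add: sum.distrib sum_subtractf sum_distrib_left[symmetric])
    finally show ?thesis .
  qed
  hence uu: "u \<bullet> u = 2 - 2 * v $ 0" using vv v unfolding scalar_prod_def by simp
  define c where "c = 2 / (u \<bullet> u)"
  have cuu: "c * (u \<bullet> u) = 2" unfolding c_def using uu0 by simp
  have cu0: "c * u $ 0 = - 1" using uu0 u_idx[OF n] unfolding c_def uu by (simp add: field_simps)
  define W where "W = mat n n (\<lambda>(i,j). (if i = j then 1 else 0) - c * u $ i * u $ j)"
  have W: "W \<in> carrier_mat n n" unfolding W_def by auto
  have WT: "transpose_mat W = W" unfolding W_def by (rule eq_matI) (auto simp: algebra_simps)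
  have WW: "W * W = 1\<^sub>m n"
  proof (rule eq_matI)
    fix i j assume "i < dim_row (1\<^sub>m n :: real mat)" "j < dim_col (1\<^sub>m n :: real mat)"
    hence i: "i < n" and j: "j < n" by auto
    have "(W * W) $$ (i,j) = (\<Sum>k\<in>{0..<n}. ((if i = k then 1 else 0) - c * u $ i * u $ k) * ((if k = j then 1 else 0) - c * u $ k * u $ j))"
      using i j W unfolding W_def by (simp add: scalar_prod_def row_def col_def)
    also have "\<dots> = (\<Sum>k\<in>{0..<n}. (if i = k then (if k = j then 1 else 0) else 0) - (if k = i then c * u $ k * u $ j else 0)
        - (if k = j then c * u $ i * u $ k else 0) + (c * c * u $ i * u $ j) * (u $ k * u $ k))"
      by (intro sum.cong) (auto simp: algebra_simps)
    also have "\<dots> = (if i = j then 1 else 0) - c * u $ i * u $ j - c * u $ i * u $ j + (c * c * u $ i * u $ j) * (u \<bullet> u)"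
      using i j u by (simp add: sum.distrib sum_subtractf sum_distrib_left[symmetric] scalar_prod_def)
    also have "\<dots> = (if i = j then 1 else 0)"
    proof -
      have "(c * c * u $ i * u $ j) * (u \<bullet> u) = (c * (u \<bullet> u)) * (c * u $ i * u $ j)" by (simp add: algebra_simps)
      thus ?thesis using cuu by simp
    qed
    finally show "(W * W) $$ (i,j) = 1\<^sub>m n $$ (i,j)" using i j by simp
  qed (insert W, auto)
  have We: "W *\<^sub>v unit_vec n 0 = v"
  proof (rule eq_vecI)
    fix i assume "i < dim_vec v"
    hence i: "i < n" using v by simp
    have "(W *\<^sub>v unit_vec n 0) $ i = (\<Sum>k\<in>{0..<n}. W $$ (i,k) * (if k = 0 then 1 else 0))"
      using i W n by (simp add: scalar_prod_def row_def)
    also have "\<dots> = (\<Sum>k\<in>{0..<n}. if k = 0 then W $$ (i,k) else 0)" by (intro sum.cong) auto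
    also have "\<dots> = W $$ (i,0)" using n by simp
    also have "\<dots> = (if i = 0 then 1 else 0) - (c * u $ 0) * u $ i" using i n unfolding W_def by simp
    also have "\<dots> = v $ i" unfolding cu0 using u_idx[OF i] by simp
    finally show "(W *\<^sub>v unit_vec n 0) $ i = v $ i" .
  qed (insert W v, auto)
  show ?thesis using W WT WW We by blast
qed

lemma mat_unit_idx:
  fixes A :: "real mat"
  assumes A: "A \<in> carrier_mat nr n" and i: "i < nr" and j: "j < n"
  shows "(A *\<^sub>v unit_vec n j) $ i = A $$ (i,j)"
proof -
  have "(A *\<^sub>v unit_vec n j) $ i = (\<Sum>k\<in>{0..<n}. A $$ (i,k) * (if k = j then 1 else 0))"
    using A i j by (simp add: scalar_prod_def row_def)
  also have "\<dots> = (\<Sum>k\<in>{0..<n}. if k = j then A $$ (i,k) else 0)" by (intro sum.cong) auto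
  also have "\<dots> = A $$ (i,j)" using j by simp
  finally show ?thesis .
qed

lemma char_poly_mat_diag:
  fixes d :: "real list"
  assumes "length d = k"
  shows "char_poly (mat_diag k (\<lambda>i. d ! i)) = (\<Prod>a\<leftarrow>d. [:- a, 1:])"
proof -
  have ut: "upper_triangular (mat_diag k (\<lambda>i. d ! i))"
    unfolding upper_triangular_def mat_diag_def by auto
  have dm: "diag_mat (mat_diag k (\<lambda>i. d ! i)) = d"
    unfolding diag_mat_def mat_diag_def using assms by (intro nth_equalityI) auto
  show ?thesis using char_poly_upper_triangular[OF mat_diag_dim ut] dm by simp
qed

lemma spectral_sorted:
  fixes A :: "real mat"
  assumes "A \<in> carrier_mat n n" "transpose_mat A = A"
  shows "\<exists>Q d. Q \<in> carrier_mat n n \<and> transpose_mat Q * Q = 1\<^sub>m n \<and> length d = n \<and>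
    sorted_wrt (\<ge>) d \<and> transpose_mat Q * A * Q = mat_diag n (\<lambda>i. d ! i)"
  using assms
proof (induction n arbitrary: A)
  case 0
  show ?case by (intro exI[of _ "1\<^sub>m 0"] exI[of _ "[]"]) (insert 0, auto intro!: eq_matI simp: mat_diag_def)
next
  case (Suc k A)
  let ?n = "Suc k"
  have A: "A \<in> carrier_mat ?n ?n" and sym: "transpose_mat A = A" using Suc.prems by auto
  define E where "E = {e. poly (char_poly A) e = 0}"
  have cp0: "char_poly A \<noteq> 0" using degree_monic_char_poly[OF A] by auto
  have finE: "finite E" unfolding E_def using poly_roots_finite[OF cp0] by simp
  obtain e0 v0 where "v0 \<in> carrier_vec ?n" "v0 \<noteq> 0\<^sub>v ?n" "A *\<^sub>v v0 = e0 \<cdot>\<^sub>v v0"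
    using real_eigen_exists[OF A sym] by auto
  hence "eigenvalue A e0" unfolding eigenvalue_def eigenvector_def using A by auto
  hence "e0 \<in> E" unfolding E_def using eigenvalue_root_char_poly[OF A] by simp
  hence neE: "E \<noteq> {}" by auto
  define e where "e = Max E"
  have eE: "e \<in> E" using Max_in[OF finE neE] e_def by simp
  have emax: "\<And>x. x \<in> E \<Longrightarrow> x \<le> e" using Max_ge[OF finE] e_def by simp
  have "eigenvalue A e" using eE eigenvalue_root_char_poly[OF A] unfolding E_def by simp
  then obtain v1 where v1: "v1 \<in> carrier_vec ?n" "v1 \<noteq> 0\<^sub>v ?n" "A *\<^sub>v v1 = e \<cdot>\<^sub>v v1"
    unfolding eigenvalue_def eigenvector_def using A by auto
  have pos: "v1 \<bullet> v1 > 0" using real_self_scalar_nonneg[of v1] real_self_scalar_zero[OF v1(1)] v1(2)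
    by force
  define v where "v = (1 / sqrt (v1 \<bullet> v1)) \<cdot>\<^sub>v v1"
  have v: "v \<in> carrier_vec ?n" using v1 by (simp add: v_def)
  have vv: "v \<bullet> v = 1"
  proof -
    have "v \<bullet> v = (1 / sqrt (v1 \<bullet> v1)) * ((1 / sqrt (v1 \<bullet> v1)) * (v1 \<bullet> v1))"
      unfolding v_def using v1(1) by simp
    also have "\<dots> = (v1 \<bullet> v1) / (sqrt (v1 \<bullet> v1) * sqrt (v1 \<bullet> v1))" by simp
    also have "\<dots> = 1" using pos by simp
    finally show ?thesis .
  qed
  have Av: "A *\<^sub>v v = e \<cdot>\<^sub>v v"
    unfolding v_def mult_mat_vec[OF A v1(1)] v1(3) by (simp add: smult_smult_assoc mult.commute)
  obtain W where W: "W \<in> carrier_mat ?n ?n" and WT: "transpose_mat W = W" and WW: "W * W = 1\<^sub>m ?n"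
    and We: "W *\<^sub>v unit_vec ?n 0 = v" using householder[OF v vv] by auto
  define A1 where "A1 = W * A * W"
  have A1: "A1 \<in> carrier_mat ?n ?n" using W A by (simp add: A1_def)
  have A1sym: "transpose_mat A1 = A1"
  proof -
    have "transpose_mat A1 = transpose_mat W * transpose_mat (W * A)"
      unfolding A1_def by (rule transpose_mult[of _ ?n ?n], insert W A, auto)
    also have "transpose_mat (W * A) = transpose_mat A * transpose_mat W"
      by (rule transpose_mult[of _ ?n ?n], insert W A, auto)
    finally show ?thesis unfolding WT sym A1_def using W A by simp
  qed
  have Wv: "W *\<^sub>v v = unit_vec ?n 0"
    unfolding We[symmetric] using W by (simp add: assoc_mult_mat_vec[symmetric, of _ ?n ?n _ ?n] WW)
  have A1e: "A1 *\<^sub>v unit_vec ?n 0 = e \<cdot>\<^sub>v unit_vec ?n 0"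
  proof -
    have "A1 *\<^sub>v unit_vec ?n 0 = W *\<^sub>v (A *\<^sub>v (W *\<^sub>v unit_vec ?n 0))"
      unfolding A1_def using W A by (simp add: assoc_mult_mat_vec[of _ ?n ?n _ ?n])
    also have "\<dots> = e \<cdot>\<^sub>v unit_vec ?n 0" unfolding We Av mult_mat_vec[OF W v] Wv ..
    finally show ?thesis .
  qed
  have col0: "A1 $$ (i,0) = (if i = 0 then e else 0)" if i: "i < ?n" for i
  proof -
    have "A1 $$ (i,0) = (A1 *\<^sub>v unit_vec ?n 0) $ i" using mat_unit_idx[OF A1 i] by simp
    thus ?thesis unfolding A1e using i by simp
  qed
  have row0: "A1 $$ (0,j) = (if j = 0 then e else 0)" if j: "j < ?n" for j
  proof -
    have "A1 $$ (0,j) = transpose_mat A1 $$ (j,0)" using j A1 by simp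
    thus ?thesis unfolding A1sym using col0[OF j] by simp
  qed
  define A22 where "A22 = mat k k (\<lambda>(i,j). A1 $$ (Suc i, Suc j))"
  have A22: "A22 \<in> carrier_mat k k" unfolding A22_def by simp
  have A22sym: "transpose_mat A22 = A22"
  proof (rule eq_matI)
    fix i j assume ij: "i < dim_row A22" "j < dim_col A22"
    have "A1 $$ (Suc j, Suc i) = transpose_mat A1 $$ (Suc i, Suc j)" using ij A1 A22 by simp
    thus "transpose_mat A22 $$ (i,j) = A22 $$ (i,j)" unfolding A1sym using ij A22
      by (simp add: A22_def)
  qed (insert A22, auto)
  define A11 where "A11 = (mat 1 1 (\<lambda>_. e) :: real mat)"
  have A11: "A11 \<in> carrier_mat 1 1" unfolding A11_def by simp
  have blk: "A1 = four_block_mat A11 (0\<^sub>m 1 k) (0\<^sub>m k 1) A22"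
  proof (rule eq_matI)
    fix i j assume "i < dim_row (four_block_mat A11 (0\<^sub>m 1 k) (0\<^sub>m k 1) A22)"
      "j < dim_col (four_block_mat A11 (0\<^sub>m 1 k) (0\<^sub>m k 1) A22)"
    hence i: "i < ?n" and j: "j < ?n" using A11 A22 by auto
    show "A1 $$ (i,j) = four_block_mat A11 (0\<^sub>m 1 k) (0\<^sub>m k 1) A22 $$ (i,j)"
    proof (cases "i = 0")
      case True thus ?thesis using row0[OF j] i j A11 A22 by (simp add: A11_def)
    next
      case False
      then obtain i' where i': "i = Suc i'" by (cases i) auto
      show ?thesis
      proof (cases "j = 0")
        case True thus ?thesis using col0[OF i] i j A11 A22 i' by (simp add: A11_def)
      next
        case False
        then obtain j' where j': "j = Suc j'" by (cases j) auto
        show ?thesis using i j A11 A22 i' j' by (simp add: A22_def)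
      qed
    qed
  qed (insert A1 A11 A22, auto)
  obtain Q' d' where Q': "Q' \<in> carrier_mat k k" and Q'Q': "transpose_mat Q' * Q' = 1\<^sub>m k"
    and d': "length d' = k" "sorted_wrt (\<ge>) d'"
    and D': "transpose_mat Q' * A22 * Q' = mat_diag k (\<lambda>i. d' ! i)"
    using Suc.IH[OF A22 A22sym] by auto
  have Q'Q'T: "Q' * transpose_mat Q' = 1\<^sub>m k"
    using mat_mult_left_right_inverse[OF _ Q' Q'Q'] Q' by auto
  have "similar_mat A22 (mat_diag k (\<lambda>i. d' ! i))"
  proof (rule similar_matI[of _ _ Q' "transpose_mat Q'" k])
    show "{A22, mat_diag k (\<lambda>i. d' ! i), Q', transpose_mat Q'} \<subseteq> carrier_mat k k" using A22 Q' by auto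
    show "A22 = Q' * mat_diag k (\<lambda>i. d' ! i) * transpose_mat Q'"
    proof -
      have "Q' * (transpose_mat Q' * A22 * Q') * transpose_mat Q' = (Q' * transpose_mat Q') * A22 * (Q' * transpose_mat Q')"
        using A22 Q' by (simp add: assoc_mult_mat[of _ k k _ k _ k])
      thus ?thesis unfolding D' Q'Q'T using A22 by simp
    qed
  qed (insert Q'Q' Q'Q'T, auto)
  hence cpA22: "char_poly A22 = (\<Prod>a\<leftarrow>d'. [:- a, 1:])"
    using char_poly_similar char_poly_mat_diag[OF d'(1)] by metis
  have "similar_mat A A1"
  proof (rule similar_matI[of _ _ W W ?n])
    have "W * A1 * W = (W * W) * A * (W * W)" unfolding A1_def using W A
      by (simp add: assoc_mult_mat[of _ ?n ?n _ ?n _ ?n])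
    thus "A = W * A1 * W" unfolding WW using A by simp
  qed (insert A A1 W WW, auto)
  hence "char_poly A = char_poly A1" using char_poly_similar by blast
  also have "\<dots> = char_poly A11 * char_poly A22" unfolding blk
    by (rule char_poly_four_block_zeros_col[OF A11 _ A22], auto)
  also have "char_poly A11 = [:-e, 1:]" by (simp add: A11_def char_poly_defs det_def sign_def)
  finally have cpA: "char_poly A = [:-e, 1:] * char_poly A22" .
  have dle: "x \<le> e" if x: "x \<in> set d'" for x
  proof -
    have "poly (char_poly A22) x = 0" unfolding cpA22 using x by (simp add: poly_prod_list_zero_iff)
    hence "x \<in> E" unfolding E_def cpA by simp
    thus ?thesis by (rule emax)
  qed
  define d where "d = e # d'"
  have d: "length d = ?n" "sorted_wrt (\<ge>) d" unfolding d_def using d' dle by auto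
  define B where "B = four_block_mat (1\<^sub>m 1) (0\<^sub>m 1 k) (0\<^sub>m k 1) Q'"
  have Bc: "B \<in> carrier_mat ?n ?n" unfolding B_def using Q' by (intro carrier_matI) auto
  have BT: "transpose_mat B = four_block_mat (1\<^sub>m 1) (0\<^sub>m 1 k) (0\<^sub>m k 1) (transpose_mat Q')"
    unfolding B_def by (subst transpose_four_block_mat[of _ 1 1 _ k _ k], insert Q', auto)
  define Q where "Q = W * B"
  have Qc: "Q \<in> carrier_mat ?n ?n" unfolding Q_def using W Bc by simp
  have QT: "transpose_mat Q = transpose_mat B * W" unfolding Q_def
    using transpose_mult[OF W Bc] WT by simp
  have BTc: "transpose_mat B \<in> carrier_mat ?n ?n" using Bc by simp
  have BTB: "transpose_mat B * B = 1\<^sub>m ?n"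
  proof -
    have Q'T: "transpose_mat Q' \<in> carrier_mat k k" using Q' by simp
    show ?thesis unfolding BT unfolding B_def
      mult_four_block_mat[OF one_carrier_mat zero_carrier_mat zero_carrier_mat Q'T
        one_carrier_mat zero_carrier_mat zero_carrier_mat Q']
      using Q' Q'Q' by simp
  qed
  have QTQ: "transpose_mat Q * Q = 1\<^sub>m ?n"
  proof -
    have "transpose_mat B * W * (W * B) = transpose_mat B * (W * W) * B"
      using BTc W Bc by (simp add: assoc_mult_mat[of _ ?n ?n _ ?n _ ?n])
    thus ?thesis unfolding QT unfolding Q_def WW using Bc BTB by simp
  qed
  have "transpose_mat Q * A * Q = transpose_mat B * A1 * B"
    unfolding QT unfolding Q_def A1_def using BTc W Bc A
    by (simp add: assoc_mult_mat[of _ ?n ?n _ ?n _ ?n])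
  also have "\<dots> = four_block_mat A11 (0\<^sub>m 1 k) (0\<^sub>m k 1) (transpose_mat Q' * A22 * Q')"
  proof -
    have Q'T: "transpose_mat Q' \<in> carrier_mat k k" using Q' by simp
    have "transpose_mat B * A1 = four_block_mat A11 (0\<^sub>m 1 k) (0\<^sub>m k 1) (transpose_mat Q' * A22)"
      unfolding BT blk
      mult_four_block_mat[OF one_carrier_mat zero_carrier_mat zero_carrier_mat Q'T
        A11 zero_carrier_mat zero_carrier_mat A22]
      using Q' A22 A11 by simp
    also have "\<dots> * B = four_block_mat A11 (0\<^sub>m 1 k) (0\<^sub>m k 1) (transpose_mat Q' * A22 * Q')"
      unfolding B_def
      mult_four_block_mat[OF A11 zero_carrier_mat zero_carrier_mat mult_carrier_mat[OF Q'T A22]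
        one_carrier_mat zero_carrier_mat zero_carrier_mat Q']
      using Q' A22 A11 by simp
    finally show ?thesis .
  qed
  also have "\<dots> = mat_diag ?n (\<lambda>i. d ! i)"
  proof (rule eq_matI)
    fix i j assume "i < dim_row (mat_diag ?n (\<lambda>i. d ! i))" "j < dim_col (mat_diag ?n (\<lambda>i. d ! i))"
    hence i: "i < ?n" and j: "j < ?n" by (auto simp: mat_diag_def)
    show "four_block_mat A11 (0\<^sub>m 1 k) (0\<^sub>m k 1) (transpose_mat Q' * A22 * Q') $$ (i, j) =
          mat_diag ?n (\<lambda>i. d ! i) $$ (i, j)"
      unfolding D' using i j A11 by (cases i; cases j) (auto simp: mat_diag_def A11_def d_def)
  qed (insert A11 Q', auto simp: mat_diag_def)
  finally show ?case using Qc QTQ d by blast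
qed

lemma prod_linear_mset:
  fixes xs ys :: "real list"
  assumes "(\<Prod>a\<leftarrow>xs. [:- a, 1:]) = (\<Prod>a\<leftarrow>ys. [:- a, 1:])"
  shows "mset xs = mset ys"
  using assms
proof (induction xs arbitrary: ys)
  case Nil
  have "length ys = 0" using degree_linear_factors[of uminus ys] Nil by simp
  thus ?case by simp
next
  case (Cons x xs ys)
  have "poly (\<Prod>a\<leftarrow>ys. [:- a, 1:]) x = 0" unfolding Cons.prems[symmetric] by simp
  hence x: "x \<in> set ys" by (simp add: poly_prod_list_zero_iff)
  have eqys: "(\<Prod>a\<leftarrow>ys. [:- a, 1:]) = [:- x, 1:] * (\<Prod>a\<leftarrow>remove1 x ys. [:- a, 1:])"
    by (rule prod_list_map_remove1[OF x])
  have c: "[:- x, 1:] * (\<Prod>a\<leftarrow>xs. [:- a, 1:]) = [:- x, 1:] * (\<Prod>a\<leftarrow>remove1 x ys. [:- a, 1:])"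
    using Cons.prems[unfolded list.map prod_list.Cons eqys] .
  have nz: "[:- x, 1:] \<noteq> (0 :: real poly)" by simp
  have "(\<Prod>a\<leftarrow>xs. [:- a, 1:]) = (\<Prod>a\<leftarrow>remove1 x ys. [:- a, 1:])"
    using mult_left_cancel[OF nz] c by blast
  from Cons.IH[OF this] have "mset xs = mset (remove1 x ys)" .
  thus ?case using x by simp
qed

lemma sorted_desc_unique:
  fixes xs ys :: "real list"
  assumes "mset xs = mset ys" "sorted_wrt (\<ge>) xs" "sorted_wrt (\<ge>) ys"
  shows "xs = ys"
proof -
  have s1: "sorted (rev xs)" "sorted (rev ys)" using assms(2,3) by (simp_all add: sorted_wrt_rev)
  have "mset (rev xs) = mset (rev ys)" using assms(1) by simp
  hence "sort (rev ys) = rev xs" using properties_for_sort s1 by metis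
  moreover have "sort (rev ys) = rev ys" using s1 sorted_sort_id by blast
  ultimately show ?thesis by simp
qed

lemma eigvals_desc_eq:
  fixes A :: "real mat"
  assumes A: "A \<in> carrier_mat n n" and d: "length d = n" "sorted_wrt (\<ge>) d"
    and cp: "char_poly A = (\<Prod>a\<leftarrow>d. [:- a, 1:])"
  shows "eigvals_desc A = d"
  unfolding eigvals_desc_def
proof (rule the_equality)
  show "length d = dim_row A \<and> sorted_wrt (\<ge>) d \<and> char_poly A = (\<Prod>a\<leftarrow>d. [:- a, 1:])"
    using A d cp by simp
next
  fix ls assume "length ls = dim_row A \<and> sorted_wrt (\<ge>) ls \<and> char_poly A = (\<Prod>a\<leftarrow>ls. [:- a, 1:])"
  hence "sorted_wrt (\<ge>) ls" "(\<Prod>a\<leftarrow>ls. [:- a, 1:]) = (\<Prod>a\<leftarrow>d. [:- a, 1:])" using cp by auto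
  thus "ls = d" using sorted_desc_unique prod_linear_mset d(2) by metis
qed

lemma spectral_full:
  fixes A :: "real mat"
  assumes A: "A \<in> carrier_mat n n" and sym: "transpose_mat A = A"
  shows "\<exists>Q. Q \<in> carrier_mat n n \<and> transpose_mat Q * Q = 1\<^sub>m n \<and> Q * transpose_mat Q = 1\<^sub>m n \<and>
     length (eigvals_desc A) = n \<and> sorted_wrt (\<ge>) (eigvals_desc A) \<and>
     A = Q * mat_diag n (\<lambda>i. eigvals_desc A ! i) * transpose_mat Q \<and>
     char_poly A = (\<Prod>a\<leftarrow>eigvals_desc A. [:- a, 1:])"
proof -
  obtain Q d where Q: "Q \<in> carrier_mat n n" and QTQ: "transpose_mat Q * Q = 1\<^sub>m n"
    and d: "length d = n" "sorted_wrt (\<ge>) d" and D: "transpose_mat Q * A * Q = mat_diag n (\<lambda>i. d ! i)"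
    using spectral_sorted[OF A sym] by blast
  have QQT: "Q * transpose_mat Q = 1\<^sub>m n"
    using mat_mult_left_right_inverse[OF _ Q QTQ] Q by auto
  have AD: "A = Q * mat_diag n (\<lambda>i. d ! i) * transpose_mat Q"
  proof -
    have "Q * (transpose_mat Q * A * Q) * transpose_mat Q = (Q * transpose_mat Q) * A * (Q * transpose_mat Q)"
      using A Q by (simp add: assoc_mult_mat[of _ n n _ n _ n])
    thus ?thesis unfolding D QQT using A by simp
  qed
  have "similar_mat A (mat_diag n (\<lambda>i. d ! i))"
    by (rule similar_matI[of _ _ Q "transpose_mat Q" n], insert AD Q QTQ QQT, auto)
  hence cp: "char_poly A = (\<Prod>a\<leftarrow>d. [:- a, 1:])"
    using char_poly_similar char_poly_mat_diag[OF d(1)] by metis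
  have ev: "eigvals_desc A = d" by (rule eigvals_desc_eq[OF A d cp])
  show ?thesis unfolding ev using Q QTQ QQT d AD cp by blast
qed

lemma knapsack:
  fixes a t :: "nat \<Rightarrow> real"
  assumes adesc: "\<And>i j. i \<le> j \<Longrightarrow> j < m \<Longrightarrow> a j \<le> a i"
    and anonneg: "\<And>i. i < m \<Longrightarrow> 0 \<le> a i"
    and t01: "\<And>i. i < m \<Longrightarrow> 0 \<le> t i \<and> t i \<le> 1"
    and tsum: "(\<Sum>i<m. t i) \<le> real r"
  shows "(\<Sum>i<m. a i * t i) \<le> (\<Sum>i<min r m. a i)"
proof (cases "m \<le> r")
  case True
  have "(\<Sum>i<m. a i * t i) \<le> (\<Sum>i<m. a i)"
    by (rule sum_mono) (use anonneg t01 in \<open>auto intro: mult_left_le\<close>)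
  thus ?thesis using True by (simp add: min_def)
next
  case False
  hence rm: "r < m" by simp
  have split1: "(\<Sum>i<m. a i * t i) = (\<Sum>i<r. a i * t i) + (\<Sum>i\<in>{r..<m}. a i * t i)"
    using rm by (metis lessThan_atLeast0 less_imp_le_nat sum.atLeastLessThan_concat zero_le)
  have split2: "(\<Sum>i<m. t i) = (\<Sum>i<r. t i) + (\<Sum>i\<in>{r..<m}. t i)"
    using rm by (metis lessThan_atLeast0 less_imp_le_nat sum.atLeastLessThan_concat zero_le)
  have "(\<Sum>i<r. a i * t i) - (\<Sum>i<r. a i) = (\<Sum>i<r. a i * (t i - 1))"
    by (simp add: sum_subtractf[symmetric] algebra_simps)
  also have "\<dots> \<le> (\<Sum>i<r. a r * (t i - 1))"
  proof (rule sum_mono)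
    fix i assume "i \<in> {..<r}"
    hence "i \<le> r" "i < m" using rm by auto
    hence "a r \<le> a i" using adesc rm by auto
    moreover have "t i - 1 \<le> 0" using t01 \<open>i < m\<close> by auto
    ultimately show "a i * (t i - 1) \<le> a r * (t i - 1)" by (simp add: mult_right_mono_neg)
  qed
  finally have h1: "(\<Sum>i<r. a i * t i) - (\<Sum>i<r. a i) \<le> a r * ((\<Sum>i<r. t i) - real r)"
    by (simp add: sum_distrib_left[symmetric] sum_subtractf)
  have h2: "(\<Sum>i\<in>{r..<m}. a i * t i) \<le> (\<Sum>i\<in>{r..<m}. a r * t i)"
  proof (rule sum_mono)
    fix i assume "i \<in> {r..<m}"
    hence "r \<le> i" "i < m" by auto
    hence "a i \<le> a r" using adesc by auto
    thus "a i * t i \<le> a r * t i" using t01 \<open>i < m\<close> by (simp add: mult_right_mono)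
  qed
  have h3: "a r * ((\<Sum>i<r. t i) - real r) + (\<Sum>i\<in>{r..<m}. a r * t i) = a r * ((\<Sum>i<m. t i) - real r)"
    unfolding split2 by (simp add: sum_distrib_left[symmetric] algebra_simps)
  have h4: "a r * ((\<Sum>i<m. t i) - real r) \<le> 0"
    using anonneg[OF rm] tsum by (simp add: mult_nonneg_nonpos)
  show ?thesis using split1 h1 h2 h3 h4 rm by (simp add: min_def)
qed

lemma abel_identity:
  fixes b d :: "nat \<Rightarrow> real"
  shows "(\<Sum>k<Q. b k * d k) = (\<Sum>r<Q. (b r - b (Suc r)) * (\<Sum>k<Suc r. d k)) + b Q * (\<Sum>k<Q. d k)"
  by (induction Q) (simp_all add: algebra_simps)

lemma abel_ineq:
  fixes b c e :: "nat \<Rightarrow> real"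
  assumes bdesc: "\<And>i j. i \<le> j \<Longrightarrow> j < q \<Longrightarrow> b j \<le> b i"
    and bnonneg: "\<And>i. i < q \<Longrightarrow> 0 \<le> b i"
    and pref: "\<And>r. r \<le> q \<Longrightarrow> (\<Sum>k<r. c k) \<le> (\<Sum>k<r. e k)"
  shows "(\<Sum>k<q. b k * c k) \<le> (\<Sum>k<q. b k * e k)"
proof -
  define b' where "b' = (\<lambda>k. if k < q then b k else 0)"
  define d where "d = (\<lambda>k. e k - c k)"
  have "(\<Sum>k<q. b' k * d k) = (\<Sum>r<q. (b' r - b' (Suc r)) * (\<Sum>k<Suc r. d k)) + b' q * (\<Sum>k<q. d k)"
    by (rule abel_identity)
  also have "\<dots> = (\<Sum>r<q. (b' r - b' (Suc r)) * (\<Sum>k<Suc r. d k))" by (simp add: b'_def)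
  also have "\<dots> \<ge> 0"
  proof (rule sum_nonneg)
    fix r assume r: "r \<in> {..<q}"
    have "b' (Suc r) \<le> b' r" using r bdesc bnonneg by (auto simp: b'_def)
    moreover have "(\<Sum>k<Suc r. d k) \<ge> 0" using pref[of "Suc r"] r by (simp add: d_def sum_subtractf)
    ultimately show "(b' r - b' (Suc r)) * (\<Sum>k<Suc r. d k) \<ge> 0" by simp
  qed
  finally have "0 \<le> (\<Sum>k<q. b' k * d k)" .
  also have "(\<Sum>k<q. b' k * d k) = (\<Sum>k<q. b k * e k) - (\<Sum>k<q. b k * c k)"
    by (simp add: b'_def d_def sum_subtractf[symmetric] algebra_simps)
  finally show ?thesis by simp
qed

lemma rearrangement:
  fixes a b :: "nat \<Rightarrow> real" and D :: "nat \<Rightarrow> nat \<Rightarrow> real"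
  assumes mq: "m \<le> q"
    and adesc: "\<And>i j. i \<le> j \<Longrightarrow> j < m \<Longrightarrow> a j \<le> a i"
    and anonneg: "\<And>i. i < m \<Longrightarrow> 0 \<le> a i"
    and bdesc: "\<And>i j. i \<le> j \<Longrightarrow> j < q \<Longrightarrow> b j \<le> b i"
    and bnonneg: "\<And>i. i < q \<Longrightarrow> 0 \<le> b i"
    and Dnonneg: "\<And>i k. i < m \<Longrightarrow> k < q \<Longrightarrow> 0 \<le> D i k"
    and rows: "\<And>i. i < m \<Longrightarrow> (\<Sum>k<q. D i k) \<le> 1"
    and cols: "\<And>k. k < q \<Longrightarrow> (\<Sum>i<m. D i k) \<le> 1"
  shows "(\<Sum>i<m. \<Sum>k<q. a i * b k * D i k) \<le> (\<Sum>i<m. a i * b i)"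
proof -
  define c where "c = (\<lambda>k. \<Sum>i<m. a i * D i k)"
  define e where "e = (\<lambda>k. if k < m then a k else 0)"
  have lhs: "(\<Sum>i<m. \<Sum>k<q. a i * b k * D i k) = (\<Sum>k<q. b k * c k)"
    unfolding c_def by (subst sum.swap) (simp add: sum_distrib_left algebra_simps)
  have pref: "(\<Sum>k<r. c k) \<le> (\<Sum>k<r. e k)" if r: "r \<le> q" for r
  proof -
    define t where "t = (\<lambda>i. \<Sum>k<r. D i k)"
    have "(\<Sum>k<r. c k) = (\<Sum>i<m. a i * t i)"
      unfolding c_def t_def by (subst sum.swap) (simp add: sum_distrib_left)
    also have "\<dots> \<le> (\<Sum>i<min r m. a i)"
    proof (rule knapsack[OF adesc anonneg])
      fix i assume i: "i < m"
      have "t i \<le> (\<Sum>k<q. D i k)" unfolding t_def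
        by (rule sum_mono2) (use r i Dnonneg in auto)
      thus "0 \<le> t i \<and> t i \<le> 1" using rows[OF i] unfolding t_def
        using Dnonneg i r by (auto intro!: sum_nonneg)
    next
      have "(\<Sum>i<m. t i) = (\<Sum>k<r. \<Sum>i<m. D i k)" unfolding t_def by (rule sum.swap)
      also have "\<dots> \<le> (\<Sum>k<r. 1)" by (rule sum_mono) (use cols r in auto)
      finally show "(\<Sum>i<m. t i) \<le> real r" by simp
    qed auto
    also have "\<dots> = (\<Sum>k<r. e k)"
    proof -
      have "(\<Sum>k<r. e k) = (\<Sum>k\<in>{..<r} \<inter> {..<m}. a k)"
        unfolding e_def by (simp add: sum.inter_restrict)
      also have "{..<r} \<inter> {..<m} = {..<min r m}" by auto
      finally show ?thesis by simp
    qed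
    finally show ?thesis .
  qed
  have "(\<Sum>k<q. b k * c k) \<le> (\<Sum>k<q. b k * e k)"
    by (rule abel_ineq[OF bdesc bnonneg pref]) auto
  also have "(\<Sum>k<q. b k * e k) = (\<Sum>k\<in>{..<q} \<inter> {..<m}. b k * a k)"
    unfolding e_def by (simp add: sum.inter_restrict if_distrib cong: if_cong)
  also have "{..<q} \<inter> {..<m} = {..<m}" using mq by auto
  finally show ?thesis unfolding lhs by (simp add: mult.commute)
qed

lemma assoc_dim:
  assumes "dim_col (A :: real mat) = dim_row B" "dim_col B = dim_row C"
  shows "(A * B) * C = A * (B * C)"
proof -
  have a: "A \<in> carrier_mat (dim_row A) (dim_row B)" using assms(1) unfolding carrier_mat_def by simp
  have b: "B \<in> carrier_mat (dim_row B) (dim_row C)" using assms(2) unfolding carrier_mat_def by simp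
  have c: "C \<in> carrier_mat (dim_row C) (dim_col C)" unfolding carrier_mat_def by simp
  show ?thesis by (rule assoc_mult_mat[OF a b c])
qed

lemma assoc_dim_vec:
  assumes "dim_col (A :: real mat) = dim_row B" "dim_col B = dim_vec v"
  shows "(A * B) *\<^sub>v v = A *\<^sub>v (B *\<^sub>v v)"
proof -
  have a: "A \<in> carrier_mat (dim_row A) (dim_row B)" using assms(1) unfolding carrier_mat_def by simp
  have b: "B \<in> carrier_mat (dim_row B) (dim_vec v)" using assms(2) unfolding carrier_mat_def by simp
  have c: "v \<in> carrier_vec (dim_vec v)" unfolding carrier_vec_def by simp
  show ?thesis by (rule assoc_mult_mat_vec[OF a b c])
qed

lemma transpose_mult_dim:
  assumes "dim_col (A :: real mat) = dim_row B"
  shows "transpose_mat (A * B) = transpose_mat B * transpose_mat A"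
proof -
  have a: "A \<in> carrier_mat (dim_row A) (dim_row B)" using assms(1) unfolding carrier_mat_def by simp
  have b: "B \<in> carrier_mat (dim_row B) (dim_col B)" unfolding carrier_mat_def by simp
  show ?thesis by (rule transpose_mult[OF a b])
qed

lemma idx_ABT:
  fixes A B :: "real mat"
  assumes "A \<in> carrier_mat r c" "B \<in> carrier_mat r' c" "i < r" "j < r'"
  shows "(A * transpose_mat B) $$ (i,j) = (\<Sum>k\<in>{0..<c}. A $$ (i,k) * B $$ (j,k))"
  using assms by (simp add: scalar_prod_def)

lemma idx_ATB:
  fixes A B :: "real mat"
  assumes "A \<in> carrier_mat r c" "B \<in> carrier_mat r c'" "i < c" "j < c'"
  shows "(transpose_mat A * B) $$ (i,j) = (\<Sum>k\<in>{0..<r}. A $$ (k,i) * B $$ (k,j))"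
  using assms by (simp add: scalar_prod_def)

lemma idx_ADAT:
  fixes A :: "real mat"
  assumes A: "A \<in> carrier_mat r c" and i: "i < r"
  shows "(A * mat_diag c g * transpose_mat A) $$ (i,i) = (\<Sum>k\<in>{0..<c}. (A $$ (i,k))\<^sup>2 * g k)"
proof -
  have eq: "A * mat_diag c g = mat r c (\<lambda>(i,j). A $$ (i,j) * g j)"
    using mat_diag_mult_right[OF A] .
  have Mc: "mat r c (\<lambda>(i,j). A $$ (i,j) * g j) \<in> carrier_mat r c" by simp
  have "(A * mat_diag c g * transpose_mat A) $$ (i,i) = (\<Sum>k\<in>{0..<c}. mat r c (\<lambda>(i,j). A $$ (i,j) * g j) $$ (i,k) * A $$ (i,k))"
    unfolding eq by (rule idx_ABT[OF Mc A i i])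
  also have "\<dots> = (\<Sum>k\<in>{0..<c}. (A $$ (i,k))\<^sup>2 * g k)"
    by (intro sum.cong refl) (use i in \<open>auto simp: power2_eq_square\<close>)
  finally show ?thesis .
qed

lemma idx_ATDA:
  fixes A :: "real mat"
  assumes A: "A \<in> carrier_mat r c" and k: "k < c"
  shows "(transpose_mat A * (mat_diag r g * A)) $$ (k,k) = (\<Sum>i\<in>{0..<r}. (A $$ (i,k))\<^sup>2 * g i)"
proof -
  have eq: "mat_diag r g * A = mat r c (\<lambda>(i,j). g i * A $$ (i,j))"
    using mat_diag_mult_left[OF A] .
  have Mc: "mat r c (\<lambda>(i,j). g i * A $$ (i,j)) \<in> carrier_mat r c" by simp
  have "(transpose_mat A * (mat_diag r g * A)) $$ (k,k) = (\<Sum>i\<in>{0..<r}. A $$ (i,k) * mat r c (\<lambda>(i,j). g i * A $$ (i,j)) $$ (i,k))"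
    unfolding eq by (rule idx_ATB[OF A Mc k k])
  also have "\<dots> = (\<Sum>i\<in>{0..<r}. (A $$ (i,k))\<^sup>2 * g i)"
    by (intro sum.cong refl) (use k in \<open>auto simp: power2_eq_square\<close>)
  finally show ?thesis .
qed

lemma quad_diag:
  fixes w :: "real vec"
  assumes w: "w \<in> carrier_vec m"
  shows "(mat_diag m g *\<^sub>v w) \<bullet> w = (\<Sum>i\<in>{0..<m}. g i * (w $ i)\<^sup>2)"
proof -
  have "mat_diag m g *\<^sub>v w = vec m (\<lambda>i. g i * w $ i)"
  proof (rule eq_vecI)
    fix i assume "i < dim_vec (vec m (\<lambda>i. g i * w $ i))"
    hence i: "i < m" by simp
    have "(mat_diag m g *\<^sub>v w) $ i = (\<Sum>k\<in>{0..<m}. (if i = k then g k else 0) * w $ k)"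
      using i w by (simp add: mat_diag_def scalar_prod_def row_def)
    also have "\<dots> = (\<Sum>k\<in>{0..<m}. if k = i then g k * w $ k else 0)" by (intro sum.cong) auto
    also have "\<dots> = g i * w $ i" using i by simp
    finally show "(mat_diag m g *\<^sub>v w) $ i = vec m (\<lambda>i. g i * w $ i) $ i" using i by simp
  qed (insert w, auto simp: mat_diag_def)
  thus ?thesis using w by (simp add: scalar_prod_def power2_eq_square algebra_simps)
qed

lemma diag_nonneg_AAT:
  fixes A :: "real mat"
  assumes "A \<in> carrier_mat r c" "i < r"
  shows "(A * transpose_mat A) $$ (i,i) \<ge> 0"
  using idx_ABT[OF assms(1) assms(1) assms(2) assms(2)] by (simp add: sum_nonneg)

lemma sum_split_nat:
  fixes g :: "nat \<Rightarrow> real"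
  assumes "m \<le> n"
  shows "(\<Sum>k\<in>{0..<n}. g k) = (\<Sum>k\<in>{0..<m}. g k) + (\<Sum>k\<in>{0..<n - m}. g (k + m))"
proof -
  have "(\<Sum>k\<in>{0..<n}. g k) = (\<Sum>k\<in>{0..<m}. g k) + (\<Sum>k\<in>{m..<n}. g k)"
    using assms by (simp add: sum.atLeastLessThan_concat)
  also have "(\<Sum>k\<in>{m..<n}. g k) = (\<Sum>k\<in>{0 + m..<(n - m) + m}. g k)" using assms by simp
  also have "\<dots> = (\<Sum>k\<in>{0..<n - m}. g (k + m))" by (rule sum.shift_bounds_nat_ivl)
  finally show ?thesis .
qed

lemma sel_PTP:
  assumes sel: "selection_operator n m P"
  shows "P \<in> carrier_mat n m" "transpose_mat P * P = 1\<^sub>m m"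
proof -
  obtain p where P: "P \<in> carrier_mat n m" and inj: "inj_on p {..<m}" and pr: "p ` {..<m} \<subseteq> {..<n}"
    and Pij: "\<And>i j. i < n \<Longrightarrow> j < m \<Longrightarrow> P $$ (i,j) = (if i = p j then 1 else 0)"
    using sel unfolding selection_operator_def by blast
  show "P \<in> carrier_mat n m" by (rule P)
  show "transpose_mat P * P = 1\<^sub>m m"
  proof (rule eq_matI)
    fix i j assume "i < dim_row (1\<^sub>m m :: real mat)" "j < dim_col (1\<^sub>m m :: real mat)"
    hence i: "i < m" and j: "j < m" by auto
    have pi: "p i < n" using pr i by auto
    have "(transpose_mat P * P) $$ (i,j) = (\<Sum>k\<in>{0..<n}. P $$ (k,i) * P $$ (k,j))"
      by (rule idx_ATB[OF P P i j])
    also have "\<dots> = (\<Sum>k\<in>{0..<n}. if k = p i then (if p i = p j then 1 else 0) else 0)"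
      by (intro sum.cong refl) (use i j Pij in auto)
    also have "\<dots> = (if p i = p j then 1 else 0)" using pi by simp
    also have "\<dots> = (if i = j then 1 else 0)" using inj i j by (auto dest: inj_onD)
    finally show "(transpose_mat P * P) $$ (i,j) = 1\<^sub>m m $$ (i,j)" using i j by simp
  qed (insert P, auto)
qed

lemma hconcat_facts:
  fixes U1 U2 :: "real mat"
  assumes U1: "U1 \<in> carrier_mat n m" and U2: "U2 \<in> carrier_mat n (n - m)" and mn: "m \<le> n"
    and orth: "transpose_mat (hconcat U1 U2) * hconcat U1 U2 = 1\<^sub>m n"
  shows "transpose_mat U1 * U1 = 1\<^sub>m m" "U1 * transpose_mat U1 + U2 * transpose_mat U2 = 1\<^sub>m n"
proof -
  define U where "U = hconcat U1 U2"
  have Uc: "U \<in> carrier_mat n n" unfolding U_def hconcat_def using U1 U2 mn by auto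
  have Uij: "U $$ (i,j) = (if j < m then U1 $$ (i,j) else U2 $$ (i, j - m))" if "i < n" "j < n" for i j
    unfolding U_def hconcat_def using that U1 U2 mn by auto
  have orth': "transpose_mat U * U = 1\<^sub>m n" using orth unfolding U_def .
  show "transpose_mat U1 * U1 = 1\<^sub>m m"
  proof (rule eq_matI)
    fix i j assume "i < dim_row (1\<^sub>m m :: real mat)" "j < dim_col (1\<^sub>m m :: real mat)"
    hence i: "i < m" and j: "j < m" by auto
    have "(transpose_mat U1 * U1) $$ (i,j) = (\<Sum>k\<in>{0..<n}. U1 $$ (k,i) * U1 $$ (k,j))"
      by (rule idx_ATB[OF U1 U1 i j])
    also have "\<dots> = (\<Sum>k\<in>{0..<n}. U $$ (k,i) * U $$ (k,j))"
      by (intro sum.cong refl) (use i j mn Uij in auto)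
    also have "\<dots> = (transpose_mat U * U) $$ (i,j)"
      using i j mn by (rule_tac idx_ATB[OF Uc Uc, symmetric]) auto
    also have "\<dots> = (if i = j then 1 else 0)" unfolding orth' using i j mn by simp
    finally show "(transpose_mat U1 * U1) $$ (i,j) = 1\<^sub>m m $$ (i,j)" using i j by simp
  qed (insert U1, auto)
  have UUT: "U * transpose_mat U = 1\<^sub>m n"
    using mat_mult_left_right_inverse[OF _ Uc orth'] Uc by auto
  show "U1 * transpose_mat U1 + U2 * transpose_mat U2 = 1\<^sub>m n"
  proof (rule eq_matI)
    fix i j assume "i < dim_row (1\<^sub>m n :: real mat)" "j < dim_col (1\<^sub>m n :: real mat)"
    hence i: "i < n" and j: "j < n" by auto
    have "(U1 * transpose_mat U1 + U2 * transpose_mat U2) $$ (i,j) =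
       (\<Sum>k\<in>{0..<m}. U1 $$ (i,k) * U1 $$ (j,k)) + (\<Sum>k\<in>{0..<n-m}. U2 $$ (i,k) * U2 $$ (j,k))"
      using idx_ABT[OF U1 U1 i j] idx_ABT[OF U2 U2 i j] i j U1 U2 by simp
    also have "\<dots> = (\<Sum>k\<in>{0..<n}. U $$ (i,k) * U $$ (j,k))"
      unfolding sum_split_nat[OF mn, of "\<lambda>k. U $$ (i,k) * U $$ (j,k)"]
      by (intro arg_cong2[where f="(+)"] sum.cong refl) (use i j Uij mn in auto)
    also have "\<dots> = (U * transpose_mat U) $$ (i,j)" by (rule idx_ABT[OF Uc Uc i j, symmetric])
    also have "\<dots> = 1\<^sub>m n $$ (i,j)" unfolding UUT ..
    finally show "(U1 * transpose_mat U1 + U2 * transpose_mat U2) $$ (i,j) = 1\<^sub>m n $$ (i,j)" .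
  qed (insert U1 U2, auto)
qed

theorem theorem2:
  fixes n m N :: nat and S :: "real set" and f :: "real \<Rightarrow> real vec"
    and U1 U2 P Binv :: "real mat" and mu :: "nat \<Rightarrow> real"
  assumes "1 \<le> m" and "m < n" and "2 * m \<le> n"
    and f_dim: "\<forall>x\<in>S. f x \<in> carrier_vec n"
    and U1: "U1 \<in> carrier_mat n m" and U2: "U2 \<in> carrier_mat n (n - m)"
    and orth: "transpose_mat (hconcat U1 U2) * hconcat U1 U2 = 1\<^sub>m n"
    and range: "\<forall>x\<in>S. (\<exists>c\<in>carrier_vec n. f x = hconcat U1 U2 *\<^sub>v c)"
    and sel: "selection_operator n m P"
    and inv: "Binv \<in> carrier_mat m m"
      "(transpose_mat P * U1) * Binv = 1\<^sub>m m" "Binv * (transpose_mat P * U1) = 1\<^sub>m m"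
    and mu: "\<forall>i<N. mu i \<in> S"
  shows
   "(let \<sigma> = sing_vals_desc (transpose_mat P * U1);
         ft = (\<lambda>i. U1 *\<^sub>v (Binv *\<^sub>v (transpose_mat P *\<^sub>v f (mu i))));
         fh = (\<lambda>i. U1 *\<^sub>v (transpose_mat U1 *\<^sub>v f (mu i)));
         X = transpose_mat U2 * mat n N (\<lambda>(r,c). f (mu c) $ r);
         lam = eigvals_desc (X * transpose_mat X)
     in (1 / real N) * (\<Sum>i<N. (ft i - fh i) \<bullet> (ft i - fh i))
        \<le> (1 / real N) * (\<Sum>j<m. (1 / (\<sigma> ! (m - 1 - j))\<^sup>2 - 1) * (lam ! j)))"
proof -
  define q where "q = n - m"
  have mn: "m \<le> n" and mq: "m \<le> q" using assms(3) by (auto simp: q_def)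
  have U2c: "U2 \<in> carrier_mat n q" using U2 by (simp add: q_def)
  have O11: "transpose_mat U1 * U1 = 1\<^sub>m m" and O: "U1 * transpose_mat U1 + U2 * transpose_mat U2 = 1\<^sub>m n"
    using hconcat_facts[OF U1 U2 mn orth] by auto
  have Pc: "P \<in> carrier_mat n m" and PTP: "transpose_mat P * P = 1\<^sub>m m" using sel_PTP[OF sel] by auto
  define B where "B = transpose_mat P * U1"
  define C where "C = transpose_mat P * U2"
  have Bc: "B \<in> carrier_mat m m" and Cc: "C \<in> carrier_mat m q" using Pc U1 U2c by (auto simp: B_def C_def)
  have Binvc: "Binv \<in> carrier_mat m m" and BBi: "B * Binv = 1\<^sub>m m" and BiB: "Binv * B = 1\<^sub>m m"
    using inv unfolding B_def by auto
  note dims = carrier_matD[OF U1] carrier_matD[OF U2c] carrier_matD[OF Pc] carrier_matD[OF Bc]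
    carrier_matD[OF Cc] carrier_matD[OF Binvc]
  have CB: "C * transpose_mat C + B * transpose_mat B = 1\<^sub>m m"
  proof -
    have "transpose_mat P * (U1 * transpose_mat U1 + U2 * transpose_mat U2) * P = 1\<^sub>m m"
      unfolding O using Pc PTP by simp
    moreover have "transpose_mat P * (U1 * transpose_mat U1 + U2 * transpose_mat U2) * P
        = transpose_mat P * (U1 * transpose_mat U1) * P + transpose_mat P * (U2 * transpose_mat U2) * P"
    proof -
      have PTc: "transpose_mat P \<in> carrier_mat m n" using Pc by simp
      have X1: "U1 * transpose_mat U1 \<in> carrier_mat n n" and X2: "U2 * transpose_mat U2 \<in> carrier_mat n n"
        using U1 U2c by auto
      have "transpose_mat P * (U1 * transpose_mat U1 + U2 * transpose_mat U2) =
         transpose_mat P * (U1 * transpose_mat U1) + transpose_mat P * (U2 * transpose_mat U2)"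
        by (rule mult_add_distrib_mat[OF PTc X1 X2])
      moreover have "(transpose_mat P * (U1 * transpose_mat U1) + transpose_mat P * (U2 * transpose_mat U2)) * P
        = transpose_mat P * (U1 * transpose_mat U1) * P + transpose_mat P * (U2 * transpose_mat U2) * P"
        by (rule add_mult_distrib_mat[OF mult_carrier_mat[OF PTc X1] mult_carrier_mat[OF PTc X2] Pc])
      ultimately show ?thesis by simp
    qed
    moreover have "B * transpose_mat B = transpose_mat P * (U1 * transpose_mat U1) * P"
      unfolding B_def by (simp add: transpose_mult_dim dims assoc_dim)
    moreover have "C * transpose_mat C = transpose_mat P * (U2 * transpose_mat U2) * P"
      unfolding C_def by (simp add: transpose_mult_dim dims assoc_dim)
    ultimately show ?thesis using Bc Cc by (metis comm_add_mat mult_carrier_mat transpose_carrier_mat)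
  qed
  define BBT where "BBT = B * transpose_mat B"
  have BBTc: "BBT \<in> carrier_mat m m" using Bc by (simp add: BBT_def)
  have BBTsym: "transpose_mat BBT = BBT" unfolding BBT_def by (simp add: transpose_mult_dim dims)
  define s where "s = eigvals_desc BBT"
  obtain Y where Yc: "Y \<in> carrier_mat m m" and YTY: "transpose_mat Y * Y = 1\<^sub>m m"
    and YYT: "Y * transpose_mat Y = 1\<^sub>m m" and slen: "length s = m" and ssort: "sorted_wrt (\<ge>) s"
    and BBTeq: "BBT = Y * mat_diag m (\<lambda>i. s ! i) * transpose_mat Y"
    and cpBBT: "char_poly BBT = (\<Prod>a\<leftarrow>s. [:- a, 1:])"
    using spectral_full[OF BBTc BBTsym] unfolding s_def by blast
  define Ds where "Ds = mat_diag m (\<lambda>i. s ! i)"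
  have Dsc: "Ds \<in> carrier_mat m m" unfolding Ds_def by simp
  note dims2 = carrier_matD[OF Yc] carrier_matD[OF Dsc] carrier_matD[OF BBTc]
  have sing: "sing_vals_desc B = map sqrt s"
  proof -
    have "similar_mat (transpose_mat B * B) BBT"
    proof (rule similar_matI[of _ _ Binv B m])
      show "transpose_mat B * B = Binv * BBT * B"
      proof -
        have "Binv * BBT * B = (Binv * B) * (transpose_mat B * B)"
          unfolding BBT_def by (simp add: assoc_dim dims)
        thus ?thesis unfolding BiB using Bc by simp
      qed
    qed (use Bc Binvc BBTc BBi BiB in auto)
    hence "char_poly (transpose_mat B * B) = (\<Prod>a\<leftarrow>s. [:- a, 1:])"
      using char_poly_similar cpBBT by metis
    hence "eigvals_desc (transpose_mat B * B) = s"
      by (rule eigvals_desc_eq[OF _ slen ssort, rotated]) (use Bc in simp)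
    thus ?thesis unfolding sing_vals_desc_def by simp
  qed
  have YTY': "transpose_mat Y * (Y * M) = M" if "dim_row M = m" for M
    using that by (simp add: assoc_dim[symmetric] dims2 YTY)
  have YYT': "Y * (transpose_mat Y * M) = M" if "dim_row M = m" for M
    using that by (simp add: assoc_dim[symmetric] dims2 YYT)
  have DsY: "transpose_mat Y * (BBT * Y) = Ds"
    unfolding BBTeq Ds_def[symmetric] by (simp add: assoc_dim dims2 YTY' YTY)
  define T where "T = transpose_mat Binv * Binv"
  have Tc: "T \<in> carrier_mat m m" using Binvc by (simp add: T_def)
  have BBTT: "BBT * T = 1\<^sub>m m"
  proof -
    have BB: "transpose_mat B * transpose_mat Binv = 1\<^sub>m m"
      using transpose_mult_dim[of Binv B] BiB by (simp add: dims)
    have BTBiT: "transpose_mat B * (transpose_mat Binv * M) = M" if "dim_row M = m" for M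
      using that BB by (simp add: assoc_dim[symmetric] dims)
    show ?thesis unfolding BBT_def T_def by (simp add: assoc_dim dims BTBiT BBi)
  qed
  have BBTT': "BBT * (T * M) = M" if "dim_row M = m" for M
    using that Tc by (simp add: assoc_dim[symmetric] dims2 BBTT)
  have Dsinv: "Ds * (transpose_mat Y * (T * Y)) = 1\<^sub>m m"
    unfolding DsY[symmetric] using Tc by (simp add: assoc_dim dims2 YYT' BBTT' YTY)
  have s_nz: "s ! i \<noteq> 0" if i: "i < m" for i
  proof
    assume "s ! i = 0"
    have "(Ds * (transpose_mat Y * (T * Y))) $$ (i,i) = s ! i * (transpose_mat Y * (T * Y)) $$ (i,i)"
      unfolding Ds_def using i Tc Yc by (subst mat_diag_mult_left[of _ m m]) auto
    hence "(1\<^sub>m m :: real mat) $$ (i,i) = 0" unfolding Dsinv using \<open>s ! i = 0\<close> by simp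
    thus False using i by simp
  qed
  have s_nonneg: "s ! i \<ge> 0" if i: "i < m" for i
  proof -
    have "Ds = (transpose_mat Y * B) * transpose_mat (transpose_mat Y * B)"
      unfolding DsY[symmetric] BBT_def by (simp add: transpose_mult_dim dims dims2 assoc_dim)
    hence "Ds $$ (i,i) \<ge> 0" using diag_nonneg_AAT[of "transpose_mat Y * B" m m i] i Yc Bc by simp
    thus ?thesis using i by (simp add: Ds_def mat_diag_def)
  qed
  define Z where "Z = transpose_mat Y * C"
  have Zc: "Z \<in> carrier_mat m q" using Yc Cc by (simp add: Z_def)
  have ZZT: "Z * transpose_mat Z + Ds = 1\<^sub>m m"
  proof -
    have "transpose_mat Y * (C * transpose_mat C + BBT) * Y = 1\<^sub>m m"
      using CB YTY Yc unfolding BBT_def by simp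
    moreover have "transpose_mat Y * (C * transpose_mat C + BBT) * Y
       = transpose_mat Y * (C * transpose_mat C) * Y + transpose_mat Y * BBT * Y"
    proof -
      have YTc: "transpose_mat Y \<in> carrier_mat m m" using Yc by simp
      have X1: "C * transpose_mat C \<in> carrier_mat m m" using Cc by simp
      have "transpose_mat Y * (C * transpose_mat C + BBT) = transpose_mat Y * (C * transpose_mat C) + transpose_mat Y * BBT"
        by (rule mult_add_distrib_mat[OF YTc X1 BBTc])
      moreover have "(transpose_mat Y * (C * transpose_mat C) + transpose_mat Y * BBT) * Y
        = transpose_mat Y * (C * transpose_mat C) * Y + transpose_mat Y * BBT * Y"
        by (rule add_mult_distrib_mat[OF mult_carrier_mat[OF YTc X1] mult_carrier_mat[OF YTc BBTc] Yc])
      ultimately show ?thesis by simp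
    qed
    moreover have "transpose_mat Y * (C * transpose_mat C) * Y = Z * transpose_mat Z"
      unfolding Z_def by (simp add: transpose_mult_dim dims dims2 assoc_dim)
    moreover have "transpose_mat Y * BBT * Y = Ds" using DsY by (simp add: assoc_dim dims2)
    ultimately show ?thesis by simp
  qed
  have ZZT_idx: "(Z * transpose_mat Z) $$ (i,j) = (if i = j then 1 - s ! i else 0)" if "i < m" "j < m" for i j
  proof -
    have "(Z * transpose_mat Z + Ds) $$ (i,j) = (if i = j then 1 else 0)" unfolding ZZT using that by simp
    thus ?thesis using that Zc by (cases "i = j") (auto simp: Ds_def mat_diag_def)
  qed
  have s_le1: "s ! i \<le> 1" if i: "i < m" for i
    using diag_nonneg_AAT[OF Zc i] ZZT_idx[OF i i] by simp
  define Dinv where "Dinv = mat_diag m (\<lambda>i. 1 / s ! i)"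
  have Dinvc: "Dinv \<in> carrier_mat m m" unfolding Dinv_def by simp
  have DinvDs: "Dinv * Ds = 1\<^sub>m m"
  proof -
    have "Dinv * Ds = mat_diag m (\<lambda>i. 1 / s ! i * s ! i)" unfolding Dinv_def Ds_def by simp
    also have "\<dots> = mat_diag m (\<lambda>i. 1)" unfolding mat_diag_def using s_nz by (intro eq_matI) auto
    finally show ?thesis by simp
  qed
  have Teq: "T = Y * (Dinv * transpose_mat Y)"
  proof -
    have "Y * (Dinv * transpose_mat Y) * BBT = 1\<^sub>m m"
    proof -
      have "Y * (Dinv * transpose_mat Y) * BBT = Y * ((Dinv * Ds) * transpose_mat Y)"
        unfolding BBTeq Ds_def[symmetric] using Dinvc by (simp add: assoc_dim dims2 YTY')
      thus ?thesis unfolding DinvDs using YYT Yc by simp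
    qed
    hence "Y * (Dinv * transpose_mat Y) * BBT * T = T" using Tc by simp
    moreover have "Y * (Dinv * transpose_mat Y) * BBT * T = Y * (Dinv * transpose_mat Y)"
      using Dinvc Tc Yc by (simp add: assoc_dim dims2 BBTT' BBTT)
    ultimately show ?thesis by simp
  qed
  define Fm where "Fm = mat n N (\<lambda>(r,c). f (mu c) $ r)"
  define X where "X = transpose_mat U2 * Fm"
  have Fmc: "Fm \<in> carrier_mat n N" unfolding Fm_def by simp
  have Xc: "X \<in> carrier_mat q N" unfolding X_def using U2c Fmc by simp
  define G where "G = X * transpose_mat X"
  have Gc: "G \<in> carrier_mat q q" using Xc by (simp add: G_def)
  have Gsym: "transpose_mat G = G" unfolding G_def using Xc by (simp add: transpose_mult_dim)
  define lam where "lam = eigvals_desc G"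
  obtain V where Vc: "V \<in> carrier_mat q q" and VTV: "transpose_mat V * V = 1\<^sub>m q"
    and VVT: "V * transpose_mat V = 1\<^sub>m q" and lamlen: "length lam = q" and lamsort: "sorted_wrt (\<ge>) lam"
    and Geq: "G = V * mat_diag q (\<lambda>i. lam ! i) * transpose_mat V"
    using spectral_full[OF Gc Gsym] unfolding lam_def by blast
  define Db where "Db = mat_diag q (\<lambda>i. lam ! i)"
  have Dbc: "Db \<in> carrier_mat q q" unfolding Db_def by simp
  note dims3 = carrier_matD[OF Xc] carrier_matD[OF Vc] carrier_matD[OF Dbc] carrier_matD[OF Gc]
    carrier_matD[OF Zc]
  have VTV': "transpose_mat V * (V * M) = M" if "dim_row M = q" for M
    using that by (simp add: assoc_dim[symmetric] dims3 VTV)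
  have VVT': "V * (transpose_mat V * M) = M" if "dim_row M = q" for M
    using that by (simp add: assoc_dim[symmetric] dims3 VVT)
  have lam_nonneg: "lam ! k \<ge> 0" if k: "k < q" for k
  proof -
    have "Db = transpose_mat V * (G * V)"
      unfolding Geq Db_def[symmetric] by (simp add: assoc_dim dims3 VTV' VTV)
    also have "\<dots> = (transpose_mat V * X) * transpose_mat (transpose_mat V * X)"
      unfolding G_def by (simp add: transpose_mult_dim dims3 assoc_dim)
    finally have "Db $$ (k,k) \<ge> 0" using diag_nonneg_AAT[of "transpose_mat V * X" q N k] k Vc Xc by simp
    thus ?thesis using k by (simp add: Db_def mat_diag_def)
  qed
  define Wm where "Wm = Z * V"
  have Wmc: "Wm \<in> carrier_mat m q" using Zc Vc by (simp add: Wm_def)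
  have WWT: "Wm * transpose_mat Wm = Z * transpose_mat Z"
    unfolding Wm_def by (simp add: transpose_mult_dim assoc_dim dims3 VVT')
  have W_idx: "(\<Sum>k\<in>{0..<q}. Wm $$ (i,k) * Wm $$ (j,k)) = (if i = j then 1 - s ! i else 0)"
    if "i < m" "j < m" for i j
    using idx_ABT[OF Wmc Wmc that] WWT ZZT_idx[OF that] by simp
  define lamb where "lamb = (\<lambda>i. if s ! i < 1 then 1 / (1 - s ! i) else 0)"
  have lamb_nonneg: "lamb i \<ge> 0" for i unfolding lamb_def by auto
  define Lam where "Lam = mat_diag m lamb"
  have Lamc: "Lam \<in> carrier_mat m m" unfolding Lam_def by simp
  have LamT: "transpose_mat Lam = Lam" unfolding Lam_def mat_diag_def by (intro eq_matI) auto
  have LWL: "Lam * (Wm * transpose_mat Wm) * Lam = Lam"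
  proof -
    have E: "Wm * transpose_mat Wm \<in> carrier_mat m m" using Wmc by simp
    have "Lam * (Wm * transpose_mat Wm) * Lam = mat m m (\<lambda>(i,j). lamb i * (Wm * transpose_mat Wm) $$ (i,j) * lamb j)"
      unfolding Lam_def mat_diag_mult_left[OF E]
      by (subst mat_diag_mult_right[of _ m m]) auto
    also have "\<dots> = Lam"
    proof (rule eq_matI)
      fix i j assume "i < dim_row Lam" "j < dim_col Lam"
      hence i: "i < m" and j: "j < m" using Lamc by auto
      have e: "(Wm * transpose_mat Wm) $$ (i,j) = (if i = j then 1 - s ! i else 0)"
        unfolding WWT using ZZT_idx[OF i j] .
      have "mat m m (\<lambda>(i,j). lamb i * (Wm * transpose_mat Wm) $$ (i,j) * lamb j) $$ (i,j)
         = lamb i * (if i = j then 1 - s ! i else 0) * lamb j" using i j e by simp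
      also have "\<dots> = (if i = j then lamb i else 0)"
      proof (cases "i = j")
        case True
        show ?thesis
        proof (cases "s ! i < 1")
          case True
          hence "1 - s ! i \<noteq> 0" by simp
          thus ?thesis using \<open>i = j\<close> True by (simp add: lamb_def)
        next
          case False
          thus ?thesis using \<open>i = j\<close> by (simp add: lamb_def)
        qed
      qed simp
      also have "\<dots> = Lam $$ (i,j)" using i j by (simp add: Lam_def mat_diag_def)
      finally show "mat m m (\<lambda>(i,j). lamb i * (Wm * transpose_mat Wm) $$ (i,j) * lamb j) $$ (i,j) = Lam $$ (i,j)" .
    qed (insert Lamc, auto)
    finally show ?thesis .
  qed
  define Mp where "Mp = transpose_mat Wm * (Lam * Wm)"
  have Mpc: "Mp \<in> carrier_mat q q" using Wmc Lamc by (simp add: Mp_def)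
  note dims4 = carrier_matD[OF Wmc] carrier_matD[OF Lamc] carrier_matD[OF Mpc]
  have MpMp: "Mp * Mp = Mp"
  proof -
    have "Mp * Mp = transpose_mat Wm * ((Lam * (Wm * transpose_mat Wm) * Lam) * Wm)"
      unfolding Mp_def by (simp add: assoc_dim dims4)
    thus ?thesis unfolding LWL Mp_def .
  qed
  have Mpsym: "transpose_mat Mp = Mp"
    unfolding Mp_def by (simp add: transpose_mult_dim dims4 LamT assoc_dim)
  have col_bound: "(\<Sum>i\<in>{0..<m}. (Wm $$ (i,k))\<^sup>2 * lamb i) \<le> 1" if k: "k < q" for k
  proof -
    have x: "Mp $$ (k,k) = (\<Sum>i\<in>{0..<m}. (Wm $$ (i,k))\<^sup>2 * lamb i)"
      unfolding Mp_def Lam_def by (rule idx_ATDA[OF Wmc k])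
    have sy: "Mp $$ (j,k) = Mp $$ (k,j)" if "j < q" for j
    proof -
      have "Mp $$ (j,k) = transpose_mat Mp $$ (k,j)" using that k Mpc by simp
      thus ?thesis unfolding Mpsym .
    qed
    have "Mp $$ (k,k) = (Mp * Mp) $$ (k,k)" unfolding MpMp ..
    also have "\<dots> = (\<Sum>j\<in>{0..<q}. Mp $$ (k,j) * Mp $$ (j,k))"
      using k Mpc by (simp add: scalar_prod_def)
    also have "\<dots> = (\<Sum>j\<in>{0..<q}. Mp $$ (k,j) * Mp $$ (k,j))"
      by (intro sum.cong refl) (simp add: sy)
    finally have eq: "Mp $$ (k,k) = (\<Sum>j\<in>{0..<q}. Mp $$ (k,j) * Mp $$ (k,j))" .
    have "Mp $$ (k,k) * Mp $$ (k,k) \<le> (\<Sum>j\<in>{0..<q}. Mp $$ (k,j) * Mp $$ (k,j))"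
      by (rule sum_real_sq_pos[OF k])
    hence "Mp $$ (k,k) * Mp $$ (k,k) \<le> Mp $$ (k,k)" unfolding eq[symmetric] .
    hence "Mp $$ (k,k) \<le> 1"
    proof -
      assume h: "Mp $$ (k,k) * Mp $$ (k,k) \<le> Mp $$ (k,k)"
      show ?thesis
      proof (rule ccontr)
        assume "\<not> Mp $$ (k,k) \<le> 1"
        hence g: "Mp $$ (k,k) > 1" by simp
        hence "Mp $$ (k,k) * 1 < Mp $$ (k,k) * Mp $$ (k,k)" by (intro mult_strict_left_mono) auto
        thus False using h by simp
      qed
    qed
    thus ?thesis unfolding x .
  qed
  have PTc: "transpose_mat P \<in> carrier_mat m n" using Pc by simp
  have U1Tc: "transpose_mat U1 \<in> carrier_mat m n" using U1 by simp
  have U2Tc: "transpose_mat U2 \<in> carrier_mat q n" using U2c by simp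
  have YTc: "transpose_mat Y \<in> carrier_mat m m" using Yc by simp
  have normc: "(U1 *\<^sub>v (Binv *\<^sub>v (transpose_mat P *\<^sub>v f (mu c))) - U1 *\<^sub>v (transpose_mat U1 *\<^sub>v f (mu c))) \<bullet>
      (U1 *\<^sub>v (Binv *\<^sub>v (transpose_mat P *\<^sub>v f (mu c))) - U1 *\<^sub>v (transpose_mat U1 *\<^sub>v f (mu c)))
      = (\<Sum>i\<in>{0..<m}. (1 / s ! i) * ((Z * X) $$ (i,c))\<^sup>2)" if c: "c < N" for c
  proof -
    define fc where "fc = f (mu c)"
    have fcc: "fc \<in> carrier_vec n" using f_dim mu c unfolding fc_def by auto
    define a where "a = transpose_mat U1 *\<^sub>v fc"
    define b where "b = transpose_mat U2 *\<^sub>v fc"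
    have ac: "a \<in> carrier_vec m" and bc: "b \<in> carrier_vec q" using fcc U1 U2c by (auto simp: a_def b_def)
    have X1: "U1 * transpose_mat U1 \<in> carrier_mat n n" and X2: "U2 * transpose_mat U2 \<in> carrier_mat n n"
      using U1 U2c by auto
    have fc_dec: "fc = U1 *\<^sub>v a + U2 *\<^sub>v b"
    proof -
      have "fc = (U1 * transpose_mat U1 + U2 * transpose_mat U2) *\<^sub>v fc" unfolding O using fcc by simp
      also have "\<dots> = (U1 * transpose_mat U1) *\<^sub>v fc + (U2 * transpose_mat U2) *\<^sub>v fc"
        by (rule add_mult_distrib_mat_vec[OF X1 X2 fcc])
      also have "\<dots> = U1 *\<^sub>v a + U2 *\<^sub>v b" unfolding a_def b_def using U1 U2c fcc by simp
      finally show ?thesis .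
    qed
    define y where "y = C *\<^sub>v b"
    have yc: "y \<in> carrier_vec m" using Cc bc by (simp add: y_def)
    have Pf: "transpose_mat P *\<^sub>v fc = B *\<^sub>v a + y"
    proof -
      have "transpose_mat P *\<^sub>v fc = transpose_mat P *\<^sub>v (U1 *\<^sub>v a) + transpose_mat P *\<^sub>v (U2 *\<^sub>v b)"
        by (subst fc_dec, rule mult_add_distrib_mat_vec[OF PTc]) (use U1 U2c ac bc in auto)
      also have "\<dots> = B *\<^sub>v a + y" unfolding B_def y_def C_def using PTc U1 U2c ac bc by simp
      finally show ?thesis .
    qed
    define kb where "kb = Binv *\<^sub>v y"
    have kbc: "kb \<in> carrier_vec m" using Binvc yc by (simp add: kb_def)
    have Bif: "Binv *\<^sub>v (transpose_mat P *\<^sub>v fc) = a + kb"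
    proof -
      have "Binv *\<^sub>v (B *\<^sub>v a + y) = Binv *\<^sub>v (B *\<^sub>v a) + Binv *\<^sub>v y"
        by (rule mult_add_distrib_mat_vec[OF Binvc]) (use Bc ac yc in auto)
      also have "Binv *\<^sub>v (B *\<^sub>v a) = a"
      proof -
        have "Binv *\<^sub>v (B *\<^sub>v a) = (Binv * B) *\<^sub>v a" by (rule assoc_mult_mat_vec[OF Binvc Bc ac, symmetric])
        also have "\<dots> = a" unfolding BiB using ac by simp
        finally show ?thesis .
      qed
      finally show ?thesis unfolding Pf kb_def .
    qed
    have diff: "U1 *\<^sub>v (Binv *\<^sub>v (transpose_mat P *\<^sub>v fc)) - U1 *\<^sub>v (transpose_mat U1 *\<^sub>v fc) = U1 *\<^sub>v kb"
    proof -
      have "U1 *\<^sub>v (a + kb) = U1 *\<^sub>v a + U1 *\<^sub>v kb" by (rule mult_add_distrib_mat_vec[OF U1 ac kbc])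
      thus ?thesis unfolding Bif a_def[symmetric] using U1 ac kbc by (intro eq_vecI) auto
    qed
    have n1: "(U1 *\<^sub>v kb) \<bullet> (U1 *\<^sub>v kb) = kb \<bullet> kb"
    proof -
      have "(transpose_mat U1 *\<^sub>v (U1 *\<^sub>v kb)) \<bullet> kb = (U1 *\<^sub>v kb) \<bullet> (U1 *\<^sub>v kb)"
        by (rule transpose_vec_mult_scalar[OF U1 kbc]) (use U1 kbc in simp)
      moreover have "transpose_mat U1 *\<^sub>v (U1 *\<^sub>v kb) = kb"
      proof -
        have "transpose_mat U1 *\<^sub>v (U1 *\<^sub>v kb) = (transpose_mat U1 * U1) *\<^sub>v kb"
          by (rule assoc_mult_mat_vec[OF U1Tc U1 kbc, symmetric])
        also have "\<dots> = kb" unfolding O11 using kbc by simp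
        finally show ?thesis .
      qed
      ultimately show ?thesis by simp
    qed
    have n2: "kb \<bullet> kb = (T *\<^sub>v y) \<bullet> y"
    proof -
      have "(transpose_mat Binv *\<^sub>v (Binv *\<^sub>v y)) \<bullet> y = (Binv *\<^sub>v y) \<bullet> (Binv *\<^sub>v y)"
        by (rule transpose_vec_mult_scalar[OF Binvc yc]) (use Binvc yc in simp)
      moreover have "transpose_mat Binv *\<^sub>v (Binv *\<^sub>v y) = T *\<^sub>v y"
        unfolding T_def by (rule assoc_mult_mat_vec[symmetric, of _ m m _ m]) (use Binvc yc in auto)
      ultimately show ?thesis unfolding kb_def by simp
    qed
    define zb where "zb = Z *\<^sub>v b"
    have zbc: "zb \<in> carrier_vec m" using Zc bc by (simp add: zb_def)
    have YTy: "transpose_mat Y *\<^sub>v y = zb"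
      unfolding zb_def y_def Z_def using YTc Cc bc by simp
    have n3: "(T *\<^sub>v y) \<bullet> y = (Dinv *\<^sub>v zb) \<bullet> zb"
    proof -
      have w: "Dinv *\<^sub>v zb \<in> carrier_vec m" using Dinvc zbc by simp
      have "T *\<^sub>v y = Y *\<^sub>v (Dinv *\<^sub>v zb)"
        unfolding Teq YTy[symmetric] using Yc Dinvc YTc yc by (simp add: assoc_dim_vec dims2 carrier_matD[OF Dinvc])
      moreover have "(transpose_mat (transpose_mat Y) *\<^sub>v (Dinv *\<^sub>v zb)) \<bullet> y = (Dinv *\<^sub>v zb) \<bullet> (transpose_mat Y *\<^sub>v y)"
        by (rule transpose_vec_mult_scalar[OF YTc yc w])
      ultimately show ?thesis unfolding YTy by simp
    qed
    have n4: "(Dinv *\<^sub>v zb) \<bullet> zb = (\<Sum>i\<in>{0..<m}. (1 / s ! i) * (zb $ i)\<^sup>2)"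
      unfolding Dinv_def by (rule quad_diag[OF zbc])
    have colX: "col X c = b"
    proof -
      have "col Fm c = fc" using fcc c unfolding Fm_def fc_def by (intro eq_vecI) auto
      thus ?thesis unfolding X_def b_def using col_mult2[OF U2Tc Fmc c] by simp
    qed
    have zbi: "zb $ i = (Z * X) $$ (i,c)" if i: "i < m" for i
      using i c Zc Xc colX unfolding zb_def by simp
    show ?thesis unfolding fc_def[symmetric] diff n1 n2 n3 n4
      by (intro sum.cong refl) (simp add: zbi)
  qed
  define R where "R = Z * X"
  have Rc: "R \<in> carrier_mat m N" using Zc Xc by (simp add: R_def)
  have G': "X * (transpose_mat X * M) = V * (Db * (transpose_mat V * M))" if "dim_row M = q" for M
  proof -
    have "X * (transpose_mat X * M) = G * M" unfolding G_def using that by (simp add: assoc_dim dims3)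
    also have "\<dots> = V * (Db * (transpose_mat V * M))" unfolding Geq Db_def[symmetric]
      using that by (simp add: assoc_dim dims3)
    finally show ?thesis .
  qed
  have RRT: "R * transpose_mat R = Wm * Db * transpose_mat Wm"
    unfolding R_def Wm_def by (simp add: transpose_mult_dim assoc_dim dims3 G')
  have rowsum: "(\<Sum>c\<in>{0..<N}. (R $$ (i,c))\<^sup>2) = (\<Sum>k\<in>{0..<q}. (Wm $$ (i,k))\<^sup>2 * lam ! k)"
    if i: "i < m" for i
  proof -
    have "(\<Sum>c\<in>{0..<N}. (R $$ (i,c))\<^sup>2) = (R * transpose_mat R) $$ (i,i)"
      using idx_ABT[OF Rc Rc i i] by (simp add: power2_eq_square)
    also have "\<dots> = (\<Sum>k\<in>{0..<q}. (Wm $$ (i,k))\<^sup>2 * lam ! k)"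
      unfolding RRT Db_def by (rule idx_ADAT[OF Wmc i])
    finally show ?thesis .
  qed
  have LHS: "(\<Sum>c<N. (U1 *\<^sub>v (Binv *\<^sub>v (transpose_mat P *\<^sub>v f (mu c))) - U1 *\<^sub>v (transpose_mat U1 *\<^sub>v f (mu c))) \<bullet>
      (U1 *\<^sub>v (Binv *\<^sub>v (transpose_mat P *\<^sub>v f (mu c))) - U1 *\<^sub>v (transpose_mat U1 *\<^sub>v f (mu c))))
     = (\<Sum>i\<in>{0..<m}. \<Sum>k\<in>{0..<q}. (1 / s ! i) * ((Wm $$ (i,k))\<^sup>2 * lam ! k))"
  proof -
    have "(\<Sum>c<N. (U1 *\<^sub>v (Binv *\<^sub>v (transpose_mat P *\<^sub>v f (mu c))) - U1 *\<^sub>v (transpose_mat U1 *\<^sub>v f (mu c))) \<bullet>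
      (U1 *\<^sub>v (Binv *\<^sub>v (transpose_mat P *\<^sub>v f (mu c))) - U1 *\<^sub>v (transpose_mat U1 *\<^sub>v f (mu c))))
      = (\<Sum>c\<in>{0..<N}. \<Sum>i\<in>{0..<m}. (1 / s ! i) * (R $$ (i,c))\<^sup>2)"
      unfolding lessThan_atLeast0 R_def by (intro sum.cong refl) (simp add: normc)
    also have "\<dots> = (\<Sum>i\<in>{0..<m}. (1 / s ! i) * (\<Sum>c\<in>{0..<N}. (R $$ (i,c))\<^sup>2))"
      by (subst sum.swap) (simp add: sum_distrib_left)
    also have "\<dots> = (\<Sum>i\<in>{0..<m}. \<Sum>k\<in>{0..<q}. (1 / s ! i) * ((Wm $$ (i,k))\<^sup>2 * lam ! k))"
      by (intro sum.cong refl) (simp add: rowsum sum_distrib_left)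
    finally show ?thesis .
  qed
  have s_pos: "s ! i > 0" if "i < m" for i using s_nz[OF that] s_nonneg[OF that] by simp
  have Wrow0: "Wm $$ (i,k) = 0" if i: "i < m" and k: "k < q" and si: "\<not> s ! i < 1" for i k
  proof -
    have "(\<Sum>k\<in>{0..<q}. (Wm $$ (i,k))\<^sup>2) = 0" using W_idx[OF i i] si s_le1[OF i]
      by (simp add: power2_eq_square)
    hence "\<forall>k\<in>{0..<q}. (Wm $$ (i,k))\<^sup>2 = 0" by (subst sum_nonneg_eq_0_iff[symmetric]) auto
    thus ?thesis using k by simp
  qed
  define a where "a = (\<lambda>j. 1 / s ! (m - 1 - j) - 1)"
  define bb where "bb = (\<lambda>k. lam ! k)"
  define Dm where "Dm = (\<lambda>j k. lamb (m - 1 - j) * (Wm $$ (m - 1 - j, k))\<^sup>2)"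
  have term_eq: "(1 / s ! i) * ((Wm $$ (i,k))\<^sup>2 * lam ! k) = (1 / s ! i - 1) * lam ! k * (lamb i * (Wm $$ (i,k))\<^sup>2)"
    if i: "i < m" and k: "k < q" for i k
  proof (cases "s ! i < 1")
    case True
    have "(1 / s ! i - 1) * lamb i = 1 / s ! i" using True s_pos[OF i] unfolding lamb_def
      by (simp add: field_simps)
    thus ?thesis by (metis mult.assoc mult.commute)
  next
    case False
    thus ?thesis using Wrow0[OF i k False] by simp
  qed
  have LHS2: "(\<Sum>i\<in>{0..<m}. \<Sum>k\<in>{0..<q}. (1 / s ! i) * ((Wm $$ (i,k))\<^sup>2 * lam ! k))
     = (\<Sum>j<m. \<Sum>k<q. a j * bb k * Dm j k)"
  proof -
    have "(\<Sum>i\<in>{0..<m}. \<Sum>k\<in>{0..<q}. (1 / s ! i) * ((Wm $$ (i,k))\<^sup>2 * lam ! k))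
      = (\<Sum>i\<in>{0..<m}. \<Sum>k\<in>{0..<q}. (1 / s ! i - 1) * lam ! k * (lamb i * (Wm $$ (i,k))\<^sup>2))"
      by (intro sum.cong refl term_eq) auto
    also have "\<dots> = (\<Sum>j\<in>{0..<m}. \<Sum>k\<in>{0..<q}. (1 / s ! (m - Suc j) - 1) * lam ! k * (lamb (m - Suc j) * (Wm $$ (m - Suc j,k))\<^sup>2))"
      by (subst sum.atLeastLessThan_rev) simp
    also have "\<dots> = (\<Sum>j<m. \<Sum>k<q. a j * bb k * Dm j k)"
      unfolding lessThan_atLeast0 a_def bb_def Dm_def by simp
    finally show ?thesis .
  qed
  have RHS: "(\<Sum>j<m. (1 / (sing_vals_desc B ! (m - 1 - j))\<^sup>2 - 1) * (lam ! j)) = (\<Sum>j<m. a j * bb j)"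
  proof (intro sum.cong refl)
    fix j assume "j \<in> {..<m}"
    hence j: "m - 1 - j < m" using assms(1) by auto
    have "(sing_vals_desc B ! (m - 1 - j))\<^sup>2 = s ! (m - 1 - j)"
      unfolding sing using j slen s_nonneg[OF j] by simp
    thus "(1 / (sing_vals_desc B ! (m - 1 - j))\<^sup>2 - 1) * (lam ! j) = a j * bb j"
      unfolding a_def bb_def by simp
  qed
  have ineq: "(\<Sum>j<m. \<Sum>k<q. a j * bb k * Dm j k) \<le> (\<Sum>j<m. a j * bb j)"
  proof (rule rearrangement[OF mq])
    fix i j assume ij: "i \<le> j" "j < m"
    have le: "s ! (m - 1 - i) \<le> s ! (m - 1 - j)"
    proof (cases "i = j")
      case False
      hence "m - 1 - j < m - 1 - i" using ij by auto
      thus ?thesis using sorted_wrt_nth_less[OF ssort] ij slen by auto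
    qed simp
    have "s ! (m - 1 - i) > 0" using s_pos ij by auto
    hence "1 / s ! (m - 1 - j) \<le> 1 / s ! (m - 1 - i)" using le by (simp add: frac_le)
    thus "a j \<le> a i" unfolding a_def by simp
  next
    fix i assume i: "i < m"
    hence i': "m - 1 - i < m" by auto
    have "1 \<le> 1 / s ! (m - 1 - i)" using s_pos[OF i'] s_le1[OF i'] by simp
    thus "0 \<le> a i" unfolding a_def by simp
  next
    fix i j assume ij: "i \<le> j" "j < q"
    show "bb j \<le> bb i"
    proof (cases "i = j")
      case False
      thus ?thesis using sorted_wrt_nth_less[OF lamsort, of i j] ij lamlen unfolding bb_def by auto
    qed simp
  next
    fix i assume "i < q"
    thus "0 \<le> bb i" unfolding bb_def by (rule lam_nonneg)
  next
    fix i k assume "i < m" "k < q"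
    thus "0 \<le> Dm i k" unfolding Dm_def using lamb_nonneg by simp
  next
    fix i assume i: "i < m"
    hence i': "m - 1 - i < m" by auto
    have "(\<Sum>k<q. Dm i k) = lamb (m - 1 - i) * (\<Sum>k\<in>{0..<q}. Wm $$ (m - 1 - i, k) * Wm $$ (m - 1 - i, k))"
      unfolding Dm_def lessThan_atLeast0 by (simp add: sum_distrib_left power2_eq_square)
    also have "\<dots> = lamb (m - 1 - i) * (1 - s ! (m - 1 - i))" using W_idx[OF i' i'] by simp
    also have "\<dots> \<le> 1" unfolding lamb_def using s_le1[OF i'] by auto
    finally show "(\<Sum>k<q. Dm i k) \<le> 1" .
  next
    fix k assume k: "k < q"
    have "(\<Sum>i<m. Dm i k) = (\<Sum>i\<in>{0..<m}. lamb (m - Suc i) * (Wm $$ (m - Suc i, k))\<^sup>2)"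
      unfolding Dm_def lessThan_atLeast0 by simp
    also have "\<dots> = (\<Sum>i\<in>{0..<m}. lamb i * (Wm $$ (i, k))\<^sup>2)"
      by (subst (2) sum.atLeastLessThan_rev) simp
    also have "\<dots> = (\<Sum>i\<in>{0..<m}. (Wm $$ (i,k))\<^sup>2 * lamb i)" by (simp add: mult.commute)
    also have "\<dots> \<le> 1" by (rule col_bound[OF k])
    finally show "(\<Sum>i<m. Dm i k) \<le> 1" .
  qed
  have main: "(\<Sum>c<N. (U1 *\<^sub>v (Binv *\<^sub>v (transpose_mat P *\<^sub>v f (mu c))) - U1 *\<^sub>v (transpose_mat U1 *\<^sub>v f (mu c))) \<bullet>
      (U1 *\<^sub>v (Binv *\<^sub>v (transpose_mat P *\<^sub>v f (mu c))) - U1 *\<^sub>v (transpose_mat U1 *\<^sub>v f (mu c))))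
     \<le> (\<Sum>j<m. (1 / (sing_vals_desc B ! (m - 1 - j))\<^sup>2 - 1) * (lam ! j))"
    unfolding LHS LHS2 RHS by (rule ineq)
  show ?thesis unfolding Let_def
    by (rule mult_left_mono) (use main in \<open>simp_all add: B_def lam_def G_def X_def Fm_def\<close>)
qed

end
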